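(* Fix $q\in[1,\infty)$. Let $(\mathcal X,d)$ be a metric space with the $q$-barycenter property: for every $K\ge1$, $\boldsymbol w\in\Delta^{K-1}$ and $\boldsymbol a\in\mathcal X^K$ the function $C\mapsto\sum_{s=1}^Kw_sd^q(a_s,C)$ attains its minimum on $\mathcal X$. Let $\boldsymbol a=(a_1,\dots,a_K)\in\mathcal X^K$, $\boldsymbol w\in\Delta^{K-1}$ and $C_{\boldsymbol a}\in\arg\min_C\sum_sw_sd^q(a_s,C)$. Fix $\alpha\in[0,1]$ and assume $\boldsymbol b\in\mathcal X^K$ satisfies, for all $s$, $$d(a_s,C_{\boldsymbol a})=d(a_s,b_s)+d(b_s,C_{\boldsymbol a}),\qquad d(b_s,a_s)=(1-\alpha^{1/q})\,d(a_s,C_{\boldsymbol a}).$$ Then $\boldsymbol b$ solves $$\inf_{\boldsymbol b'\in\mathcal X^K}\Big\{\sum_{s=1}^Kw_sd^q(b'_s,a_s)\;:\;\min_{C\in\mathcal X}\sum_{s=1}^Kw_sd^q(b'_s,C)\le\alpha\sum_{s=1}^Kw_sd^q(a_s,C_{\boldsymbol a})\Big\}.$$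
   Context: $\Delta^{K-1}$ is the probability simplex in $\mathbb R^K$. *)

theory Defs
  imports "HOL-Analysis.Analysis"
begin

definition prob_simplex :: "nat \<Rightarrow> (nat \<Rightarrow> real) set" where
  "prob_simplex K = {w. (\<forall>s<K. 0 \<le> w s) \<and> (\<Sum>s<K. w s) = 1}"

definition wcost :: "real \<Rightarrow> nat \<Rightarrow> (nat \<Rightarrow> real) \<Rightarrow> (nat \<Rightarrow> 'a::metric_space) \<Rightarrow> 'a \<Rightarrow> real" where
  "wcost q K w a C = (\<Sum>s<K. w s * (dist (a s) C) powr q)"

definition q_barycenter_property :: "real \<Rightarrow> 'a::metric_space itself \<Rightarrow> bool" where
  "q_barycenter_property q (TYPE('a)) \<longleftrightarrow>
     (\<forall>K\<ge>1. \<forall>w\<in>prob_simplex K. \<forall>a::nat \<Rightarrow> 'a.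
        \<exists>C. \<forall>C'. wcost q K w a C \<le> wcost q K w a C')"

end

theory Submission
  imports Defs
begin

lemma ge1: fixes q l :: real assumes "1 \<le> q" "0 < l" "l \<le> 1" shows "1 \<le> l powr (1 - q)"
proof -
  have a1: "l powr (q - 1) \<le> 1" using powr_le1[of "q - 1" l] assms by auto
  have a2: "0 < l powr (q - 1)" using assms by simp
  have "l powr (1 - q) = inverse (l powr (q - 1))" using assms by (simp add: powr_minus[symmetric])
  thus ?thesis using a1 a2 by (simp add: one_le_inverse_iff)
qed

lemma split_pos:
  fixes q l u v :: real
  assumes q: "1 \<le> q" and l: "0 < l" "l < 1" and u: "0 < u" and v: "0 < v"
  shows "(u + v) powr q \<le> (1 - l) powr (1 - q) * u powr q + l powr (1 - q) * v powr q"
proof -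
  have c: "((1 - l) *\<^sub>R (u/(1-l)) + l *\<^sub>R (v/l)) powr q \<le> (1 - l) * (u/(1-l)) powr q + l * (v/l) powr q"
    using convex_onD[OF powr_convex[OF q], of l "u/(1-l)" "v/l"] l u v by auto
  have e1: "(1 - l) * (u/(1-l)) powr q = (1 - l) powr (1 - q) * u powr q"
    using l u by (simp add: powr_divide powr_diff)
  have e2: "l * (v/l) powr q = l powr (1 - q) * v powr q"
    using l v by (simp add: powr_divide powr_diff)
  show ?thesis using c e1 e2 l by simp
qed

lemma split_ineq:
  fixes q l u v :: real
  assumes q: "1 \<le> q" and l: "0 < l" "l < 1" and u: "0 \<le> u" and v: "0 \<le> v"
  shows "(u + v) powr q \<le> (1 - l) powr (1 - q) * u powr q + l powr (1 - q) * v powr q"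
proof (cases "u = 0 \<or> v = 0")
  case True
  have g1: "1 \<le> l powr (1 - q)" using ge1[of q l] q l by auto
  have g2: "1 \<le> (1 - l) powr (1 - q)" using ge1[of q "1 - l"] q l by auto
  have p1: "0 \<le> u powr q" "0 \<le> v powr q" by auto
  show ?thesis
  proof (cases "u = 0")
    case True
    then show ?thesis using g1 p1 mult_right_mono[OF g1 p1(2)] by simp
  next
    case False
    then have "v = 0" using \<open>u = 0 \<or> v = 0\<close> by auto
    then show ?thesis using g2 p1 mult_right_mono[OF g2 p1(1)] by simp
  qed
next
  case False
  then show ?thesis using split_pos[OF q l] u v by auto
qed

lemma wcost_nonneg:
  assumes "w \<in> prob_simplex K" shows "0 \<le> wcost q K w a C"
  using assms unfolding wcost_def prob_simplex_def by (auto intro!: sum_nonneg)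

theorem lemma22:
  fixes q \<alpha> :: real and K :: nat and w :: "nat \<Rightarrow> real"
    and a b :: "nat \<Rightarrow> 'a::metric_space" and Ca :: 'a
  assumes hq: "1 \<le> q"
    and hbary: "q_barycenter_property q TYPE('a)"
    and hK: "1 \<le> K"
    and hw: "w \<in> prob_simplex K"
    and hCa: "\<forall>C. wcost q K w a Ca \<le> wcost q K w a C"
    and h\<alpha>: "0 \<le> \<alpha>" "\<alpha> \<le> 1"
    and hgeo: "\<forall>s<K. dist (a s) Ca = dist (a s) (b s) + dist (b s) Ca"
    and hdist: "\<forall>s<K. dist (b s) (a s) = (1 - \<alpha> powr (1 / q)) * dist (a s) Ca"
  shows "(INF C. wcost q K w b C) \<le> \<alpha> * wcost q K w a Ca \<and>
         (\<forall>b'::nat \<Rightarrow> 'a. (INF C. wcost q K w b' C) \<le> \<alpha> * wcost q K w a Ca \<longrightarrow>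
            (\<Sum>s<K. w s * (dist (b s) (a s)) powr q) \<le> (\<Sum>s<K. w s * (dist (b' s) (a s)) powr q))"
proof -
  define t where "t = \<alpha> powr (1 / q)"
  define W where "W = wcost q K w a Ca"
  have wnn: "\<And>s. s < K \<Longrightarrow> 0 \<le> w s" using hw unfolding prob_simplex_def by auto
  have t0: "0 \<le> t" unfolding t_def by simp
  have t1: "t \<le> 1" unfolding t_def using h\<alpha> hq powr_le1[of "1 / q" \<alpha>] by auto
  have tq: "t powr q = \<alpha>" unfolding t_def using h\<alpha> hq by (simp add: powr_powr)
  have W0: "0 \<le> W" unfolding W_def using wcost_nonneg[OF hw] .
  have bd: "\<And>b'. bdd_below (range (wcost q K w b'))"
    using wcost_nonneg[OF hw] by (intro bdd_belowI[where m=0]) auto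
  have dbC: "\<And>s. s < K \<Longrightarrow> dist (b s) Ca = t * dist (a s) Ca"
  proof -
    fix s assume s: "s < K"
    have "dist (a s) (b s) = (1 - t) * dist (a s) Ca" using hdist s by (simp add: dist_commute t_def)
    then show "dist (b s) Ca = t * dist (a s) Ca" using hgeo s by (simp add: algebra_simps)
  qed
  have costb: "wcost q K w b Ca = \<alpha> * W"
  proof -
    have "wcost q K w b Ca = (\<Sum>s<K. w s * (t * dist (a s) Ca) powr q)"
      unfolding wcost_def by (rule sum.cong) (simp_all add: dbC)
    also have "\<dots> = (\<Sum>s<K. \<alpha> * (w s * dist (a s) Ca powr q))"
      using t0 by (intro sum.cong) (simp_all add: powr_mult tq)
    also have "\<dots> = \<alpha> * W" unfolding W_def wcost_def by (simp add: sum_distrib_left)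
    finally show ?thesis .
  qed
  have lhs: "(\<Sum>s<K. w s * (dist (b s) (a s)) powr q) = (1 - t) powr q * W"
  proof -
    have "(\<Sum>s<K. w s * (dist (b s) (a s)) powr q) = (\<Sum>s<K. (1 - t) powr q * (w s * dist (a s) Ca powr q))"
      using t1 hdist by (intro sum.cong) (simp_all add: powr_mult t_def)
    also have "\<dots> = (1 - t) powr q * W" unfolding W_def wcost_def by (simp add: sum_distrib_left)
    finally show ?thesis .
  qed
  have part1: "(INF C. wcost q K w b C) \<le> \<alpha> * W"
    using cINF_lower[OF bd[of b], of Ca] costb by simp
  have part2: "(\<Sum>s<K. w s * (dist (b s) (a s)) powr q) \<le> (\<Sum>s<K. w s * (dist (b' s) (a s)) powr q)"
    if hb': "(INF C. wcost q K w b' C) \<le> \<alpha> * W" for b' :: "nat \<Rightarrow> 'a"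
  proof -
    obtain C' where C': "\<forall>C. wcost q K w b' C' \<le> wcost q K w b' C"
      using hbary hK hw unfolding q_barycenter_property_def by blast
    have "wcost q K w b' C' \<le> (INF C. wcost q K w b' C)"
      using C' by (intro cINF_greatest) auto
    hence V: "wcost q K w b' C' \<le> \<alpha> * W" using hb' by simp
    define X where "X = (\<Sum>s<K. w s * (dist (b' s) (a s)) powr q)"
    have X0: "0 \<le> X" unfolding X_def using wnn by (auto intro!: sum_nonneg)
    have WY: "W \<le> (\<Sum>s<K. w s * (dist (b' s) (a s) + dist (b' s) C') powr q)"
    proof -
      have "W \<le> wcost q K w a C'" using hCa W_def by auto
      also have "\<dots> \<le> (\<Sum>s<K. w s * (dist (b' s) (a s) + dist (b' s) C') powr q)"
        unfolding wcost_def
      proof (intro sum_mono mult_left_mono)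
        fix s assume "s \<in> {..<K}"
        then show "0 \<le> w s" using wnn by auto
        show "dist (a s) C' powr q \<le> (dist (b' s) (a s) + dist (b' s) C') powr q"
          using hq by (intro powr_mono2) (auto simp: dist_triangle3)
      qed
      finally show ?thesis .
    qed
    show ?thesis
    proof -
      consider "t = 1" | "t = 0" | "0 < t" "t < 1" using t0 t1 by linarith
      then show ?thesis
      proof cases
        case 1
        then show ?thesis using lhs X0 hq unfolding X_def by simp
      next
        case 2
        then have "\<alpha> = 0" using tq hq by auto
        then have V0: "wcost q K w b' C' \<le> 0" using V by simp
        have terms0: "\<forall>s\<in>{..<K}. w s * dist (b' s) C' powr q = 0"
          using V0 wnn unfolding wcost_def
          by (subst sum_nonneg_eq_0_iff[symmetric]) (auto intro!: antisym sum_nonneg)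
        have "(\<Sum>s<K. w s * (dist (b' s) (a s) + dist (b' s) C') powr q) = X"
          unfolding X_def
        proof (rule sum.cong)
          fix s assume s: "s \<in> {..<K}"
          show "w s * (dist (b' s) (a s) + dist (b' s) C') powr q = w s * dist (b' s) (a s) powr q"
          proof (cases "w s = 0")
            case False
            then have "dist (b' s) C' = 0" using terms0 s by auto
            then show ?thesis by simp
          qed simp
        qed simp
        then show ?thesis using WY lhs 2 unfolding X_def by simp
      next
        case 3
        have "(\<Sum>s<K. w s * (dist (b' s) (a s) + dist (b' s) C') powr q)
            \<le> (\<Sum>s<K. w s * ((1 - t) powr (1 - q) * dist (b' s) (a s) powr q + t powr (1 - q) * dist (b' s) C' powr q))"
          using wnn by (intro sum_mono mult_left_mono split_ineq[OF hq 3]) auto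
        also have "\<dots> = (1 - t) powr (1 - q) * X + t powr (1 - q) * wcost q K w b' C'"
          unfolding X_def wcost_def by (simp add: algebra_simps sum.distrib sum_distrib_left)
        also have "\<dots> \<le> (1 - t) powr (1 - q) * X + t powr (1 - q) * (\<alpha> * W)"
          using V by (intro add_left_mono mult_left_mono) auto
        also have "t powr (1 - q) * (\<alpha> * W) = t * W"
          using 3 by (simp add: tq[symmetric] powr_add[symmetric] mult.assoc[symmetric])
        finally have "(1 - t) * W \<le> (1 - t) powr (1 - q) * X" using WY by (simp add: algebra_simps)
        then have "(1 - t) powr (q - 1) * ((1 - t) * W) \<le> (1 - t) powr (q - 1) * ((1 - t) powr (1 - q) * X)"
          by (intro mult_left_mono) auto
        moreover have "(1 - t) powr (q - 1) * ((1 - t) * W) = (1 - t) powr q * W"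
          using 3 by (simp add: powr_mult_base mult.assoc[symmetric] mult.commute)
        moreover have "(1 - t) powr (q - 1) * ((1 - t) powr (1 - q) * X) = X"
          using 3 by (simp add: powr_add[symmetric] mult.assoc[symmetric])
        ultimately show ?thesis using lhs unfolding X_def by simp
      qed
    qed
  qed
  show ?thesis using part1 part2 unfolding W_def by blast
qed

end
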